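(* Let $n\ge 1$ and $P\ge 1$ be integers, and set $l_n=\frac{3\cdot 2^{n-1}-1}{2}$. For real $x$ define $$S_n(x)=\sum_{l=2^{n-1}}^{2^{n}-1}\frac{1}{x-(2l-1)\pi i}.$$ Then for every real $x$, $$\left|\,S_n(x)-\sum_{l=2^{n-1}}^{2^{n}-1}\frac{1}{x-(2l_n-1)\pi i}\sum_{\nu=0}^{P-1}\left(\frac{2(l-l_n)\pi i}{x-(2l_n-1)\pi i}\right)^{\nu}\right|\le \frac{1}{2\pi}\cdot\frac{1}{3^{P}}.$$
   Context: Here $i$ denotes the imaginary unit. The sums $S_n$ are the dyadic groups of the pole expansion $\sum_{l\ge1}\frac{1}{x-(2l-1)\pi i}$ of the Fermi–Dirac function: the $n$-th group collects the poles $(2l-1)\pi i$ with $2^{n-1}\le l\le 2^n-1$, and $l_n$ is the midpoint of the index range $[2^{n-1},2^n-1]$. The subtracted double sum is the truncation after $P$ terms of the geometric-series (multipole) expansion of each term of $S_n$ about the pole $(2l_n-1)\pi i$. *)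

theory Defs
  imports "HOL-Analysis.Analysis"
begin

text \<open>Midpoint of the index range [2^(n-1), 2^n - 1] (a half-integer for n \<ge> 2).\<close>
definition lmid :: "nat \<Rightarrow> real" where
  "lmid n = (3 * 2 ^ (n - 1) - 1) / 2"

text \<open>Dyadic group of the pole expansion of the Fermi-Dirac function.\<close>
definition S_grp :: "nat \<Rightarrow> real \<Rightarrow> complex" where
  "S_grp n x = (\<Sum>l = 2 ^ (n - 1)..2 ^ n - 1.
      1 / (complex_of_real x - (2 * of_nat l - 1) * complex_of_real pi * \<i>))"

end

theory Submission imports Defs begin

definition ss :: "nat \<Rightarrow> real" where "ss m = (\<Sum>l\<in>{m..<2*m}. 1/(2*real l - 1))"

lemma ss_step: "m \<ge> 1 \<Longrightarrow> ss (Suc m) = ss m - 1/(2*real m - 1) + 1/(4*real m - 1) + 1/(4*real m + 1)"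
proof -
  assume m: "m \<ge> 1"
  have "{m..<2*Suc m} = insert m {Suc m..<2*Suc m}" using m by auto
  hence a: "(\<Sum>l\<in>{m..<2*Suc m}. 1/(2*real l - 1)) = 1/(2*real m - 1) + ss (Suc m)"
    unfolding ss_def by simp
  have "{m..<2*Suc m} = insert (2*m+1) (insert (2*m) {m..<2*m})" by auto
  hence b: "(\<Sum>l\<in>{m..<2*Suc m}. 1/(2*real l - 1)) = 1/(4*real m + 1) + 1/(4*real m - 1) + ss m"
    unfolding ss_def by (simp add: algebra_simps)
  show ?thesis using a b by simp
qed

lemma ss_dec: "m \<ge> 1 \<Longrightarrow> ss (Suc m) \<le> ss m"
proof -
  assume m: "m \<ge> 1"
  have "1/(4*real m - 1) + 1/(4*real m + 1) \<le> 1/(2*real m - 1)"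
  proof -
    have p: "2*real m - 1 > 0" "4*real m - 1 > 0" using m by auto
    have "1/(4*real m - 1) + 1/(4*real m + 1) = 8*real m/((4*real m - 1)*(4*real m + 1))"
      using p by (simp add: field_simps)
    also have "\<dots> \<le> 1/(2*real m - 1)" using p m
    proof -
      have "8*real m*(2*real m - 1) \<le> 1*((4*real m - 1)*(4*real m + 1))" using m by (simp add: algebra_simps)
      thus ?thesis using p by (simp add: frac_le_eq divide_simps)
    qed
    finally show ?thesis .
  qed
  thus ?thesis using ss_step[OF m] by simp
qed

lemma ss_le: "m \<ge> 3 \<Longrightarrow> ss m \<le> 1/2"
proof (induction m rule: dec_induct)
  case base
  have "{3..<2*3} = {3,4,5::nat}" by auto
  thus ?case unfolding ss_def by simp
next
  case (step k)
  thus ?case using ss_dec[of k] by simp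
qed

lemma ss_fac: "m \<ge> 1 \<Longrightarrow> 3*(real m - 1)/(3*real m - 2) * ss m \<le> 1/2"
proof -
  assume m: "m \<ge> 1"
  have nn: "ss m \<ge> 0" unfolding ss_def by (intro sum_nonneg) auto
  consider "m = 1" | "m = 2" | "m \<ge> 3" using m by linarith
  thus ?thesis
  proof cases
    case 2
    have "{2..<2*2} = {2,3::nat}" by auto
    thus ?thesis using 2 unfolding ss_def by simp
  next
    case 3
    have "3*(real m - 1)/(3*real m - 2) \<le> 1" using 3 by (simp add: field_simps)
    moreover have "3*(real m - 1)/(3*real m - 2) \<ge> 0" using 3 by simp
    ultimately show ?thesis using ss_le[OF 3] nn
      using mult_mono[of "3*(real m - 1)/(3*real m - 2)" 1 "ss m" "1/2"] by simp
  qed simp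
qed

lemma term_err:
  fixes C q :: complex
  assumes "C \<noteq> 0" "q \<noteq> 1"
  shows "1/(C - q*C) - 1/C * (\<Sum>\<nu><P. q^\<nu>) = q^P/(C - q*C)"
proof -
  have "C - q*C = C*(1-q)" by (simp add: algebra_simps)
  moreover have "1 - q \<noteq> 0" using assms by simp
  ultimately show ?thesis using assms by (simp add: sum_gp_strict field_simps)
qed


theorem mainTheorem1:
  fixes n P :: nat and x :: real
  assumes "n \<ge> 1" and "P \<ge> 1"
  shows "cmod (S_grp n x
     - (\<Sum>l = 2 ^ (n - 1)..2 ^ n - 1.
          1 / (complex_of_real x - (2 * complex_of_real (lmid n) - 1) * complex_of_real pi * \<i>)
          * (\<Sum>\<nu> < P. ((2 * (of_nat l - complex_of_real (lmid n)) * complex_of_real pi * \<i>)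
               / (complex_of_real x - (2 * complex_of_real (lmid n) - 1) * complex_of_real pi * \<i>)) ^ \<nu>)))
   \<le> 1 / (2 * pi) * (1 / 3 ^ P)"
proof -
  define m :: nat where "m = 2^(n-1)"
  have m1: "m \<ge> 1" unfolding m_def by simp
  have n2: "2^n - 1 = 2*m - 1"
  proof -
    obtain k where k: "n = Suc k" using assms(1) by (cases n) auto
    show ?thesis unfolding m_def k by simp
  qed
  have rng: "{2^(n-1)..2^n-1} = {m..<2*m}" using n2 m1 unfolding m_def[symmetric] by auto
  have lm: "lmid n = (3*real m - 1)/2" unfolding lmid_def m_def by simp
  define D where "D = complex_of_real x - (2 * complex_of_real (lmid n) - 1) * complex_of_real pi * \<i>"
  define q where "q = (\<lambda>l::nat. (2 * (of_nat l - complex_of_real (lmid n)) * complex_of_real pi * \<i>) / D)"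
  define A where "A = (\<lambda>l::nat. complex_of_real x - (2 * of_nat l - 1) * complex_of_real pi * \<i>)"
  have ImD: "Im D = - (3*real m - 2) * pi" unfolding D_def lm by (simp add: field_simps)
  have D: "cmod D \<ge> (3*real m - 2) * pi"
  proof -
    have "(3*real m - 2)*pi = - Im D" using ImD by (simp add: algebra_simps)
    thus ?thesis using abs_Im_le_cmod[of D] by linarith
  qed
  have Dpos: "(3*real m - 2) * pi > 0" using m1 by simp
  hence D0: "D \<noteq> 0" using D by auto
  have ImA: "Im (A l) = - (2*real l - 1) * pi" for l unfolding A_def by (simp add: algebra_simps)
  have A: "cmod (A l) \<ge> (2*real l - 1) * pi" for l
  proof -
    have "(2*real l - 1)*pi = - Im (A l)" using ImA[of l] by (simp add: algebra_simps)
    thus ?thesis using abs_Im_le_cmod[of "A l"] by linarith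
  qed
  have AqD: "A l = D - q l * D" for l
  proof -
    have "q l * D = 2 * (of_nat l - complex_of_real (lmid n)) * complex_of_real pi * \<i>"
      unfolding q_def using D0 by simp
    thus ?thesis unfolding A_def D_def by (simp add: algebra_simps)
  qed
  have eq: "S_grp n x - (\<Sum>l = 2 ^ (n - 1)..2 ^ n - 1. 1/D * (\<Sum>\<nu><P. (q l)^\<nu>))
      = (\<Sum>l\<in>{m..<2*m}. (q l)^P / A l)"
  proof -
    have "S_grp n x = (\<Sum>l\<in>{m..<2*m}. 1 / A l)" unfolding S_grp_def A_def rng ..
    hence "S_grp n x - (\<Sum>l = 2 ^ (n - 1)..2 ^ n - 1. 1/D * (\<Sum>\<nu><P. (q l)^\<nu>))
       = (\<Sum>l\<in>{m..<2*m}. 1 / A l - 1/D * (\<Sum>\<nu><P. (q l)^\<nu>))"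
      unfolding rng by (simp add: sum_subtractf)
    also have "\<dots> = (\<Sum>l\<in>{m..<2*m}. (q l)^P / A l)"
    proof (rule sum.cong[OF refl])
      fix l assume l: "l \<in> {m..<2*m}"
      have "A l \<noteq> 0"
      proof
        assume "A l = 0"
        hence "Im (A l) = 0" by simp
        thus False using ImA[of l] l m1 by simp
      qed
      hence "q l \<noteq> 1" using AqD[of l] by auto
      thus "1 / A l - 1/D * (\<Sum>\<nu><P. (q l)^\<nu>) = (q l)^P / A l"
        unfolding AqD using term_err[OF D0] by simp
    qed
    finally show ?thesis .
  qed
  define \<rho> where "\<rho> = (real m - 1)/(3*real m - 2)"
  have qb: "cmod (q l) \<le> \<rho>" if l: "l \<in> {m..<2*m}" for l
  proof -
    have "cmod (q l) = 2 * \<bar>real l - lmid n\<bar> * pi / cmod D"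
    proof -
      have e: "2 * (of_nat l - complex_of_real (lmid n)) * complex_of_real pi * \<i> = complex_of_real (2*(real l - lmid n)*pi) * \<i>" by simp
      show ?thesis unfolding q_def e norm_divide norm_mult norm_of_real norm_ii by (cases "real l \<ge> lmid n") (auto simp: abs_mult D0)
    qed
    also have "\<dots> \<le> (real m - 1) * pi / ((3*real m - 2) * pi)"
    proof (rule frac_le)
      have l1: "real m \<le> real l" "real l + 1 \<le> 2*real m" using l by auto
      have "2 * \<bar>real l - lmid n\<bar> = \<bar>2*real l - (3*real m - 1)\<bar>"
      proof -
        have h: "2*real l - (3*real m - 1) = 2*(real l - (3*real m-1)/2)" by (simp add: field_simps)
        show ?thesis unfolding lm h abs_mult by simp
      qed
      also have "\<dots> \<le> real m - 1" using l1 by (simp add: abs_le_iff)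
      finally have "2 * \<bar>real l - lmid n\<bar> \<le> real m - 1" .
      thus "2 * \<bar>real l - lmid n\<bar> * pi \<le> (real m - 1) * pi" by simp
      show "0 \<le> (real m - 1) * pi" using m1 by simp
    qed (use D Dpos in auto)
    also have "\<dots> = \<rho>" unfolding \<rho>_def by simp
    finally show ?thesis .
  qed
  have \<rho>0: "\<rho> \<ge> 0" "3*\<rho> \<le> 1" unfolding \<rho>_def using m1 by (auto simp: field_simps)
  have "cmod (\<Sum>l\<in>{m..<2*m}. (q l)^P / A l) \<le> 1 / (2 * pi) * (1 / 3 ^ P)"
  proof -
  have "cmod (\<Sum>l\<in>{m..<2*m}. (q l)^P / A l) \<le> (\<Sum>l\<in>{m..<2*m}. \<rho>^P / ((2*real l - 1) * pi))"
  proof (rule order.trans[OF norm_sum sum_mono])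
    fix l assume l: "l \<in> {m..<2*m}"
    have p: "(2*real l - 1) * pi > 0" using l m1 by simp
    have "cmod ((q l)^P / A l) = cmod (q l) ^ P / cmod (A l)" by (simp add: norm_divide norm_power)
    also have "\<dots> \<le> \<rho>^P / ((2*real l - 1) * pi)"
      by (rule frac_le) (use qb[OF l] A[of l] p \<rho>0 in \<open>auto intro: power_mono\<close>)
    finally show "cmod ((q l)^P / A l) \<le> \<rho>^P / ((2*real l - 1) * pi)" .
  qed
  also have "\<dots> = \<rho>^P / pi * ss m"
    unfolding ss_def sum_distrib_left by (intro sum.cong) auto
  also have "\<dots> \<le> 1 / (2 * pi) * (1 / 3 ^ P)"
  proof -
    have "\<rho>^P = (3*\<rho>)^P / 3^P" by (simp add: power_mult_distrib)
    also have "(3*\<rho>)^P \<le> 3*\<rho>"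
      using power_decreasing[of 1 P "3*\<rho>"] assms(2) \<rho>0 by simp
    hence "(3*\<rho>)^P / 3^P \<le> 3*\<rho> / 3^P" by (intro divide_right_mono) auto
    finally have r: "\<rho>^P \<le> 3*\<rho> / 3^P" .
    have ssn: "ss m \<ge> 0" unfolding ss_def by (intro sum_nonneg) auto
    have "\<rho>^P / pi * ss m \<le> 3*\<rho> / 3^P / pi * ss m"
      using r ssn by (intro mult_right_mono divide_right_mono) auto
    also have "\<dots> = (3*\<rho> * ss m) / (pi * 3^P)" by simp
    also have "\<dots> \<le> (1/2) / (pi * 3^P)"
      using ss_fac[OF m1] unfolding \<rho>_def by (intro divide_right_mono) (auto simp: mult.assoc)
    also have "\<dots> = 1 / (2 * pi) * (1 / 3 ^ P)" by simp
    finally show ?thesis .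
  qed
  finally show ?thesis .
  qed
  hence "cmod (S_grp n x - (\<Sum>l = 2 ^ (n - 1)..2 ^ n - 1. 1/D * (\<Sum>\<nu><P. (q l)^\<nu>))) \<le> 1 / (2 * pi) * (1 / 3 ^ P)"
    by (subst eq)
  thus ?thesis unfolding D_def q_def .
qed

end
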